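(* Let $d\ge 1$, $n,k\ge 1$, and let $M$ be a lonesum $0$-$1$ matrix with $n$ rows and $k$ columns. Then $M$ belongs to $\mathcal{L}_{\leq d}(n,k)$ if and only if the following three properties hold: (i) $M$ has no all-zero column and no all-zero row; (ii) if $(c_1,\ldots,c_m)$ is the column sequence of $M$, then $w(c_{i+1})-w(c_i)\leq d$ for all $i=1,\ldots,m-1$; (iii) if $(r_1,\ldots,r_m)$ is the row sequence of $M$, then $w(r_{i+1})-w(r_i)\leq d$ for all $i=1,\ldots,m-1$.
   Context: A $0$-$1$ matrix is lonesum if it is uniquely determined by its row sum vector and column sum vector; equivalently, it contains no $2\times 2$ submatrix equal to $\begin{pmatrix}1&0\\0&1\end{pmatrix}$ or $\begin{pmatrix}0&1\\1&0\end{pmatrix}$. Two rows (resp. columns) are of the same type iff they are identical vectors. The weight $w(v)$ of a row or column $v$ is its number of $1$ entries. In a lonesum matrix, distinct columns have distinct weights (and the set of $1$-positions of a lighter column is contained in that of a heavier one); the column sequence is the list $(c_1,\ldots,c_m)$ of the distinct column vectors of $M$ ordered by increasing weight, and the row sequence $(r_1,\ldots,r_m)$ is defined analogously for rows. $\mathcal{L}_{\leq d}(n,k)$ is the set of lonesum $0$-$1$ matrices with $n$ rows and $k$ columns having no all-zero row and no all-zero column, in which at most $d$ columns are of the same type and at most $d$ rows are of the same type.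
   Formalization: Conditions (ii) and (iii) also require $w(c_1)\leq d$ and $w(r_1)\leq d$, so the weight gaps are bounded for i = 0,...,m-1 with $w(c_0)=w(r_0)=0$. The statement above fails without it. *)

theory Defs
  imports Main
begin

text \<open>An n x k 0-1 matrix is modelled as M :: nat => nat => bool, where only the
entries M i j with i < n and j < k are relevant (True = 1, False = 0).\<close>

definition row_vec :: "nat \<Rightarrow> (nat \<Rightarrow> nat \<Rightarrow> bool) \<Rightarrow> nat \<Rightarrow> bool list" where
  "row_vec k M i = map (M i) [0..<k]"

definition col_vec :: "nat \<Rightarrow> (nat \<Rightarrow> nat \<Rightarrow> bool) \<Rightarrow> nat \<Rightarrow> bool list" where
  "col_vec n M j = map (\<lambda>i. M i j) [0..<n]"

definition weight :: "bool list \<Rightarrow> nat" where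
  "weight v = length (filter id v)"

definition lonesum :: "nat \<Rightarrow> nat \<Rightarrow> (nat \<Rightarrow> nat \<Rightarrow> bool) \<Rightarrow> bool" where
  "lonesum n k M \<longleftrightarrow>
     (\<forall>M'. (\<forall>i<n. weight (row_vec k M' i) = weight (row_vec k M i)) \<and>
           (\<forall>j<k. weight (col_vec n M' j) = weight (col_vec n M j))
        \<longrightarrow> (\<forall>i<n. \<forall>j<k. M' i j = M i j))"

definition L_le :: "nat \<Rightarrow> nat \<Rightarrow> nat \<Rightarrow> (nat \<Rightarrow> nat \<Rightarrow> bool) \<Rightarrow> bool" where
  "L_le d n k M \<longleftrightarrow>
     lonesum n k M \<and>
     (\<forall>i<n. True \<in> set (row_vec k M i)) \<and>
     (\<forall>j<k. True \<in> set (col_vec n M j)) \<and>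
     (\<forall>j<k. card {j'. j' < k \<and> col_vec n M j' = col_vec n M j} \<le> d) \<and>
     (\<forall>i<n. card {i'. i' < n \<and> row_vec k M i' = row_vec k M i} \<le> d)"

definition col_seq :: "nat \<Rightarrow> nat \<Rightarrow> (nat \<Rightarrow> nat \<Rightarrow> bool) \<Rightarrow> bool list list" where
  "col_seq n k M = sort_key weight (remdups (map (col_vec n M) [0..<k]))"

definition row_seq :: "nat \<Rightarrow> nat \<Rightarrow> (nat \<Rightarrow> nat \<Rightarrow> bool) \<Rightarrow> bool list list" where
  "row_seq n k M = sort_key weight (remdups (map (row_vec k M) [0..<n]))"

text \<open>Consecutive weight gaps at most d, with the convention w(v_0) = 0.\<close>
definition gaps_le :: "nat \<Rightarrow> bool list list \<Rightarrow> bool" where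
  "gaps_le d vs \<longleftrightarrow>
     (vs \<noteq> [] \<longrightarrow> weight (vs ! 0) \<le> d) \<and>
     (\<forall>i. Suc i < length vs \<longrightarrow> weight (vs ! Suc i) - weight (vs ! i) \<le> d)"

end

theory Submission
  imports Defs
begin

definition nosw :: "nat \<Rightarrow> nat \<Rightarrow> (nat \<Rightarrow> nat \<Rightarrow> bool) \<Rightarrow> bool" where
  "nosw n k N \<longleftrightarrow> (\<forall>i<n. \<forall>i'<n. \<forall>j<k. \<forall>j'<k. N i j \<and> N i' j' \<longrightarrow> N i j' \<or> N i' j)"

lemma weight_map: "weight (map f [0..<m]) = card {x. x < m \<and> f x}"
proof -
  have "{i. i < m \<and> map f [0..<m] ! i} = {x. x < m \<and> f x}" by auto
  then show ?thesis by (simp add: weight_def length_filter_conv_card)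
qed

lemma card_swap: "finite S \<Longrightarrow> a \<in> S \<Longrightarrow> b \<notin> S \<Longrightarrow> card (insert b (S - {a})) = card S"
proof -
  assume f: "finite S" and a: "a \<in> S" and b: "b \<notin> S"
  have "card (insert b (S - {a})) = Suc (card (S - {a}))" using f b by simp
  also have "\<dots> = card S"
  proof -
    have "card S > 0" using f a card_gt_0_iff by blast
    moreover have "card (S - {a}) = card S - 1" using f a by (simp add: card_Diff_singleton)
    ultimately show ?thesis by simp
  qed
  finally show ?thesis .
qed

lemma lonesum_nosw:
  assumes L: "lonesum n k M" shows "nosw n k M"
  unfolding nosw_def
proof (intro allI impI, rule ccontr)
  fix i i' j j' assume ii: "i<n" "i'<n" "j<k" "j'<k" and h1: "M i j \<and> M i' j'" and h2: "\<not> (M i j' \<or> M i' j)"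
  have ne: "i \<noteq> i'" "j \<noteq> j'" using h1 h2 by auto
  define M' where "M' a b = (if (a=i \<and> b=j) \<or> (a=i' \<and> b=j') then False
      else if (a=i \<and> b=j') \<or> (a=i' \<and> b=j) then True else M a b)" for a b
  have rows: "\<forall>a<n. weight (row_vec k M' a) = weight (row_vec k M a)"
  proof (intro allI impI)
    fix a assume "a<n"
    show "weight (row_vec k M' a) = weight (row_vec k M a)"
      unfolding row_vec_def weight_map
    proof (cases "a = i \<or> a = i'")
      case True
      then consider "a = i" | "a = i'" by blast
      then show "card {x. x < k \<and> M' a x} = card {x. x < k \<and> M a x}"
      proof cases
        case 1
        have e: "{x. x < k \<and> M' a x} = insert j' ({x. x < k \<and> M a x} - {j})"
          using 1 ne h1 h2 ii by (auto simp: M'_def)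
        show ?thesis unfolding e by (rule card_swap) (use 1 h1 h2 ii in auto)
      next
        case 2
        have e: "{x. x < k \<and> M' a x} = insert j ({x. x < k \<and> M a x} - {j'})"
          using 2 ne h1 h2 ii by (auto simp: M'_def)
        show ?thesis unfolding e by (rule card_swap) (use 2 h1 h2 ii in auto)
      qed
    next
      case False
      then have "{x. x < k \<and> M' a x} = {x. x < k \<and> M a x}" by (auto simp: M'_def)
      then show "card {x. x < k \<and> M' a x} = card {x. x < k \<and> M a x}" by simp
    qed
  qed
  have cols: "\<forall>b<k. weight (col_vec n M' b) = weight (col_vec n M b)"
  proof (intro allI impI)
    fix b assume "b<k"
    show "weight (col_vec n M' b) = weight (col_vec n M b)"
      unfolding col_vec_def weight_map
    proof (cases "b = j \<or> b = j'")
      case True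
      then consider "b = j" | "b = j'" by blast
      then show "card {x. x < n \<and> M' x b} = card {x. x < n \<and> M x b}"
      proof cases
        case 1
        have e: "{x. x < n \<and> M' x b} = insert i' ({x. x < n \<and> M x b} - {i})"
          using 1 ne h1 h2 ii by (auto simp: M'_def)
        show ?thesis unfolding e by (rule card_swap) (use 1 h1 h2 ii in auto)
      next
        case 2
        have e: "{x. x < n \<and> M' x b} = insert i ({x. x < n \<and> M x b} - {i'})"
          using 2 ne h1 h2 ii by (auto simp: M'_def)
        show ?thesis unfolding e by (rule card_swap) (use 2 h1 h2 ii in auto)
      qed
    next
      case False
      then have "{x. x < n \<and> M' x b} = {x. x < n \<and> M x b}" by (auto simp: M'_def)
      then show "card {x. x < n \<and> M' x b} = card {x. x < n \<and> M x b}" by simp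
    qed
  qed
  have "M' i j = M i j" using L rows cols ii unfolding lonesum_def by blast
  then show False using h1 by (simp add: M'_def)
qed

lemma nosw_D: "nosw n k N \<Longrightarrow> i<n \<Longrightarrow> i'<n \<Longrightarrow> j<k \<Longrightarrow> j'<k \<Longrightarrow> N i j \<Longrightarrow> N i' j' \<Longrightarrow> N i j' \<or> N i' j"
  unfolding nosw_def by blast

lemma nosw_T: "nosw n k M \<Longrightarrow> nosw k n (\<lambda>i j. M j i)"
  unfolding nosw_def[of k n] using nosw_D[of n k M] by blast

lemma core:
  assumes ns: "nosw n k N" and nz: "\<forall>i<n. \<exists>j<k. N i j"
  shows "gaps_le d (col_seq n k N) \<longleftrightarrow>
    (\<forall>i<n. card {i'. i' < n \<and> row_vec k N i' = row_vec k N i} \<le> d)"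
proof -
  define vs where "vs = col_seq n k N"
  define sp where "sp v = {i. i < n \<and> v ! i}" for v :: "bool list"
  have finsp: "\<And>v. finite (sp v)" unfolding sp_def by simp
  have setvs: "set vs = col_vec n N ` {..<k}" unfolding vs_def col_seq_def by (simp add: atLeast0LessThan)
  have dist: "distinct vs" unfolding vs_def col_seq_def by simp
  have sorted: "sorted (map weight vs)" unfolding vs_def col_seq_def by (rule sorted_sort_key)
  have colnth: "\<And>j i. i < n \<Longrightarrow> col_vec n N j ! i = N i j" by (simp add: col_vec_def)
  have len: "length v = n" if vin: "v \<in> set vs" for v
  proof -
    obtain j where "v = col_vec n N j" using vin unfolding setvs by blast
    then show ?thesis by (simp add: col_vec_def)
  qed
  have wsp: "\<And>v. v \<in> set vs \<Longrightarrow> weight v = card (sp v)"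
    using len by (simp add: weight_def length_filter_conv_card sp_def)
  have chain: "\<And>u v. u \<in> set vs \<Longrightarrow> v \<in> set vs \<Longrightarrow> sp u \<subseteq> sp v \<or> sp v \<subseteq> sp u"
  proof -
    fix u v assume "u \<in> set vs" "v \<in> set vs"
    then obtain j j' where jj: "j<k" "j'<k" "u = col_vec n N j" "v = col_vec n N j'"
      unfolding setvs lessThan_iff by blast
    show "sp u \<subseteq> sp v \<or> sp v \<subseteq> sp u"
    proof (rule ccontr)
      assume "\<not> (sp u \<subseteq> sp v \<or> sp v \<subseteq> sp u)"
      then obtain a b where ab: "a \<in> sp u" "a \<notin> sp v" "b \<in> sp v" "b \<notin> sp u" by blast
      then have "a<n" "b<n" "N a j" "\<not> N a j'" "N b j'" "\<not> N b j" using jj colnth by (auto simp: sp_def)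
      then show False using nosw_D[OF ns \<open>a<n\<close> \<open>b<n\<close> jj(1) jj(2)] by blast
    qed
  qed
  have mono: "\<And>p q. p \<le> q \<Longrightarrow> q < length vs \<Longrightarrow> sp (vs!p) \<subseteq> sp (vs!q)"
  proof -
    fix p q assume pq: "p \<le> q" "q < length vs"
    have inset: "vs!p \<in> set vs" "vs!q \<in> set vs" using pq by auto
    have "(map weight vs)!p \<le> (map weight vs)!q" using sorted_nth_mono[OF sorted, of p q] pq by simp
    then have "weight (vs!p) \<le> weight (vs!q)" using pq by simp
    then have c: "card (sp (vs!p)) \<le> card (sp (vs!q))" using wsp inset by simp
    show "sp (vs!p) \<subseteq> sp (vs!q)"
      using chain[OF inset] card_seteq[OF finsp _ c] by blast
  qed
  have neq: "\<And>p q. p < q \<Longrightarrow> q < length vs \<Longrightarrow> sp (vs!p) \<noteq> sp (vs!q)"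
  proof
    fix p q assume pq: "p<q" "q < length vs" "sp (vs!p) = sp (vs!q)"
    have l: "length (vs!p) = n" "length (vs!q) = n" using pq len by auto
    have "vs!p = vs!q"
    proof (rule nth_equalityI)
      show "length (vs!p) = length (vs!q)" using l by simp
      fix i assume "i < length (vs!p)"
      then have "i < n" using l by simp
      moreover from pq(3) have "i \<in> sp (vs!p) \<longleftrightarrow> i \<in> sp (vs!q)" by simp
      ultimately show "vs!p!i = vs!q!i" unfolding sp_def by simp
    qed
    then have "p = q" using dist pq(2) pq(1) nth_eq_iff_index_eq[OF dist] by simp
    then show False using pq(1) by simp
  qed
  have vcol: "\<exists>q<length vs. vs!q = col_vec n N j" if jk: "j<k" for j
  proof -
    have "col_vec n N j \<in> set vs" unfolding setvs using jk by simp
    then show ?thesis by (simp add: in_set_conv_nth)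
  qed
  have incol: "\<exists>j<k. vs!q = col_vec n N j" if ql: "q < length vs" for q
  proof -
    have "vs!q \<in> col_vec n N ` {..<k}" using setvs ql nth_mem by blast
    then obtain j where "j \<in> {..<k}" "vs!q = col_vec n N j" by blast
    then show ?thesis by blast
  qed
  have rowiff: "\<And>i i'. row_vec k N i' = row_vec k N i \<longleftrightarrow> (\<forall>j<k. N i' j = N i j)"
    by (simp add: row_vec_def map_eq_conv Ball_def)
  show ?thesis unfolding vs_def[symmetric]
  proof
    assume g: "gaps_le d vs"
    show "\<forall>i<n. card {i'. i' < n \<and> row_vec k N i' = row_vec k N i} \<le> d"
    proof (intro allI impI)
      fix i assume i: "i<n"
      obtain j where j: "j<k" "N i j" using nz i by blast
      obtain q where q: "q < length vs" "vs!q = col_vec n N j" using vcol j by blast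
      define p where "p = (LEAST p. p < length vs \<and> vs!p!i)"
      have pP: "p < length vs \<and> vs!p!i" unfolding p_def
        by (rule LeastI[of _ q]) (use q j i colnth in auto)
      have pmin: "\<And>p'. p' < p \<Longrightarrow> \<not> vs!p'!i"
      proof -
        fix p' assume "p' < p"
        then have "\<not> (p' < length vs \<and> vs!p'!i)" unfolding p_def by (rule not_less_Least)
        then show "\<not> vs!p'!i" using \<open>p' < p\<close> pP by auto
      qed
      have same: "\<And>i' q'. row_vec k N i' = row_vec k N i \<Longrightarrow> q' < length vs \<Longrightarrow> i' < n \<Longrightarrow> vs!q'!i' = vs!q'!i"
      proof -
        fix i' q' assume a: "row_vec k N i' = row_vec k N i" "q' < length vs" "i' < n"
        obtain j' where "j'<k" "vs!q' = col_vec n N j'" using incol a by blast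
        then show "vs!q'!i' = vs!q'!i" using a rowiff colnth i by auto
      qed
      let ?C = "{i'. i' < n \<and> row_vec k N i' = row_vec k N i}"
      have finC: "finite ?C" by simp
      show "card ?C \<le> d"
      proof (cases p)
        case 0
        have "?C \<subseteq> sp (vs!0)" using same pP 0 by (auto simp: sp_def)
        hence "card ?C \<le> card (sp (vs!0))" by (rule card_mono[OF finsp])
        also have "\<dots> = weight (vs!0)" using wsp[OF nth_mem] pP 0 by simp
        also have "\<dots> \<le> d" using g pP unfolding gaps_le_def by auto
        finally show ?thesis .
      next
        case (Suc p0)
        have sub: "sp (vs!p0) \<subseteq> sp (vs!p)" using mono Suc pP by auto
        have "?C \<subseteq> sp (vs!p) - sp (vs!p0)"
          using same pP pmin[of p0] Suc by (auto simp: sp_def)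
        hence "card ?C \<le> card (sp (vs!p) - sp (vs!p0))" by (rule card_mono[rotated]) (simp add: finsp)
        also have "\<dots> = card (sp (vs!p)) - card (sp (vs!p0))" by (rule card_Diff_subset[OF finsp sub])
        also have "\<dots> = weight (vs!p) - weight (vs!p0)" using wsp pP Suc by simp
        also have "\<dots> \<le> d" using g Suc pP unfolding gaps_le_def by auto
        finally show ?thesis .
      qed
    qed
  next
    assume c: "\<forall>i<n. card {i'. i' < n \<and> row_vec k N i' = row_vec k N i} \<le> d"
    have sameP: "\<And>i i'. i < n \<Longrightarrow> i' < n \<Longrightarrow> (\<forall>q<length vs. vs!q!i' = vs!q!i) \<Longrightarrow>
        i' \<in> {i'. i' < n \<and> row_vec k N i' = row_vec k N i}"
    proof -
      fix i i' assume a: "i < n" "i' < n" "\<forall>q<length vs. vs!q!i' = vs!q!i"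
      have "\<forall>j<k. N i' j = N i j"
      proof (intro allI impI)
        fix j assume "j<k"
        then obtain q where q: "q < length vs" "vs!q = col_vec n N j" using vcol by blast
        have "vs!q!i' = N i' j" "vs!q!i = N i j" using q colnth a by auto
        then show "N i' j = N i j" using a q by auto
      qed
      then show "i' \<in> {i'. i' < n \<and> row_vec k N i' = row_vec k N i}" using a rowiff by auto
    qed
    have cardle: "\<And>A i. A \<subseteq> {i'. i' < n \<and> row_vec k N i' = row_vec k N i} \<Longrightarrow> i < n \<Longrightarrow> card A \<le> d"
    proof -
      fix A i assume a: "A \<subseteq> {i'. i' < n \<and> row_vec k N i' = row_vec k N i}" "i < n"
      have "card A \<le> card {i'. i' < n \<and> row_vec k N i' = row_vec k N i}"
        by (rule card_mono[OF _ a(1)]) simp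
      then show "card A \<le> d" using c a(2) by (meson le_trans)
    qed
    show "gaps_le d vs" unfolding gaps_le_def
    proof (intro conjI allI impI)
      assume ne: "vs \<noteq> []"
      let ?A = "sp (vs!0)"
      have w: "weight (vs!0) = card ?A" using wsp ne by simp
      show "weight (vs!0) \<le> d"
      proof (cases "?A = {}")
        case True then show ?thesis using w by simp
      next
        case False
        then obtain i where i: "i \<in> ?A" by blast
        have "?A \<subseteq> {i'. i' < n \<and> row_vec k N i' = row_vec k N i}"
        proof
          fix i' assume i': "i' \<in> ?A"
          have "\<forall>q<length vs. vs!q!i' = vs!q!i"
          proof (intro allI impI)
            fix q assume "q < length vs"
            then have "?A \<subseteq> sp (vs!q)" by (intro mono) simp_all
            then show "vs!q!i' = vs!q!i" using i i' unfolding sp_def by blast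
          qed
          moreover have "i < n" "i' < n" using i i' unfolding sp_def by auto
          ultimately show "i' \<in> {i'. i' < n \<and> row_vec k N i' = row_vec k N i}"
            using sameP by blast
        qed
        moreover have "i < n" using i unfolding sp_def by auto
        ultimately show ?thesis using w cardle by simp
      qed
    next
      fix p assume p: "Suc p < length vs"
      let ?A = "sp (vs!Suc p)" and ?B = "sp (vs!p)"
      have BA: "?B \<subseteq> ?A" using mono p by simp
      have "?B \<noteq> ?A" using neq p by simp
      then obtain i where i: "i \<in> ?A" "i \<notin> ?B" using BA by blast
      have "?A - ?B \<subseteq> {i'. i' < n \<and> row_vec k N i' = row_vec k N i}"
      proof
        fix i' assume i': "i' \<in> ?A - ?B"
        have "\<forall>q<length vs. vs!q!i' = vs!q!i"
        proof (intro allI impI)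
          fix q assume q: "q < length vs"
          show "vs!q!i' = vs!q!i"
          proof (cases "q \<le> p")
            case True
            then have "sp (vs!q) \<subseteq> ?B" using mono p by simp
            then show ?thesis using i i' unfolding sp_def by blast
          next
            case False
            then have "?A \<subseteq> sp (vs!q)" using mono q by simp
            then show ?thesis using i i' unfolding sp_def by blast
          qed
        qed
        moreover have "i < n" "i' < n" using i i' unfolding sp_def by auto
        ultimately show "i' \<in> {i'. i' < n \<and> row_vec k N i' = row_vec k N i}"
          using sameP by blast
      qed
      moreover have "i < n" using i unfolding sp_def by auto
      ultimately have "card (?A - ?B) \<le> d" using cardle by blast
      moreover have "card (?A - ?B) = card ?A - card ?B" by (rule card_Diff_subset[OF finsp BA])
      moreover have "weight (vs!Suc p) = card ?A" "weight (vs!p) = card ?B" using wsp p by auto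
      ultimately show "weight (vs ! Suc p) - weight (vs ! p) \<le> d" by simp
    qed
  qed
qed

lemma colT: "col_vec k (\<lambda>i j. M j i) = row_vec k M"
  by (rule ext) (simp add: col_vec_def row_vec_def)
lemma rowT: "row_vec n (\<lambda>i j. M j i) = col_vec n M"
  by (rule ext) (simp add: col_vec_def row_vec_def)
lemma nz_row: "True \<in> set (row_vec k M i) \<longleftrightarrow> (\<exists>j<k. M i j)"
  by (simp add: row_vec_def image_iff) (meson atLeastLessThan_iff zero_le)
lemma nz_col: "True \<in> set (col_vec n M j) \<longleftrightarrow> (\<exists>i<n. M i j)"
  by (simp add: col_vec_def image_iff) (meson atLeastLessThan_iff zero_le)

theorem theorem4:
  fixes d n k :: nat and M :: "nat \<Rightarrow> nat \<Rightarrow> bool"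
  assumes "d \<ge> 1" and "n \<ge> 1" and "k \<ge> 1"
    and "lonesum n k M"
  shows "L_le d n k M \<longleftrightarrow>
           ((\<forall>j<k. True \<in> set (col_vec n M j)) \<and> (\<forall>i<n. True \<in> set (row_vec k M i)) \<and>
            gaps_le d (col_seq n k M) \<and> gaps_le d (row_seq n k M))"
proof -
  have ns: "nosw n k M" using assms(4) by (rule lonesum_nosw)
  have nsT: "nosw k n (\<lambda>i j. M j i)" using ns by (rule nosw_T)
  have rs: "row_seq n k M = col_seq k n (\<lambda>i j. M j i)"
    unfolding row_seq_def col_seq_def colT ..
  show ?thesis
  proof
    assume L: "L_le d n k M"
    have r: "\<forall>i<n. \<exists>j<k. M i j" and c: "\<forall>j<k. \<exists>i<n. M i j"
      using L unfolding L_le_def nz_row nz_col by auto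
    have g1: "gaps_le d (col_seq n k M)" using core[OF ns r] L unfolding L_le_def by blast
    have g2: "gaps_le d (row_seq n k M)" unfolding rs
      using core[OF nsT, of d] c L unfolding L_le_def rowT by blast
    show "(\<forall>j<k. True \<in> set (col_vec n M j)) \<and> (\<forall>i<n. True \<in> set (row_vec k M i)) \<and>
            gaps_le d (col_seq n k M) \<and> gaps_le d (row_seq n k M)"
      using g1 g2 r c unfolding nz_row nz_col by blast
  next
    assume R: "(\<forall>j<k. True \<in> set (col_vec n M j)) \<and> (\<forall>i<n. True \<in> set (row_vec k M i)) \<and>
            gaps_le d (col_seq n k M) \<and> gaps_le d (row_seq n k M)"
    have r: "\<forall>i<n. \<exists>j<k. M i j" and c: "\<forall>j<k. \<exists>i<n. M i j"
      using R unfolding nz_row nz_col by auto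
    have m1: "\<forall>i<n. card {i'. i' < n \<and> row_vec k M i' = row_vec k M i} \<le> d"
      using core[OF ns r] R by blast
    have m2: "\<forall>j<k. card {j'. j' < k \<and> col_vec n M j' = col_vec n M j} \<le> d"
      using core[OF nsT c, of d] R unfolding rs[symmetric] rowT by blast
    show "L_le d n k M" unfolding L_le_def using assms(4) R m1 m2 by blast
  qed
qed

end
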